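(* Let $P$ be a set of $n$ points in the plane in convex position, let $S$ be an optimal dominating set of $G(P)$, and let $\phi:\mathcal{A}\rightarrow S$ be an assignment (for some partition $\mathcal{A}$ of $P$) satisfying: (1) $\phi$ is line separable; (2) each center $p\in S$ is assigned at most two sublists, one of which contains $p$; (3) for any center $p_i$ that is assigned a second sublist $\beta_i$ (not containing $p_i$), there exist $p_t\in\beta_i$ and centers $q_1,q_2\in S$ with $q_1\in P(i,t)$, $q_2\in P(t,i)$, $p_t\notin D_{q_1}$, $p_t\notin D_{q_2}$. Let $p_i,p_j\in S$ be two centers each of whose groups consists of two sublists. Removing these four sublists from the cyclic list $P$ leaves four portions: one bounded by the two sublists of $p_i$, one bounded by the two sublists of $p_j$, and two portions each bounded by a sublist of $p_i$ and a sublist of $p_j$. Then for any other center of $S$ whose group consists of two sublists, either both of its sublists lie in one of the first two portions, or one of its sublists lies in one of the last two portions and the other lies in the other of the last two portions.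
   Context: $P$ is in convex position (every point is a hull vertex), no three points collinear, no four cocircular; $P$ is the cyclic list $\langle p_1,\dots,p_n\rangle$ counterclockwise along the hull. A sublist is a contiguous subsequence of the cyclic list. $P[i,j]$ is the sublist from $p_i$ counterclockwise to $p_j$ inclusive; $P(i,j)$ excludes $p_i,p_j$. $D_p$ is the closed unit disk centered at $p$. $G(P)$ has an edge between two points of $P$ iff their distance is at most $1$. A dominating set $S\subseteq P$: every point of $P$ is in $S$ or within distance $1$ of a point of $S$; its points are centers. Optimal dominating set: the points carry positive weights and $S$ is a dominating set of minimum total weight (unit weights give the minimum-cardinality case). A partition $\mathcal{A}$ of $P$ is a partition of the cyclic list into consecutive nonempty disjoint sublists. An assignment $\phi:\mathcal{A}\to S$ maps each sublist $\alpha$ to one center $p$ with $\alpha\subseteq D_p$; the group of $p$ consists of the sublists (points) assigned to $p$. $\phi$ is line separable if for every two distinct centers some line has the points of one group on one side or on the line and those of the other group strictly on the other side. *)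

theory Defs
  imports "HOL-Analysis.Analysis"
begin

text \<open>Points are p 0, ..., p (n-1) (indices 0-based), listed counterclockwise.\<close>

definition orient :: "real^2 \<Rightarrow> real^2 \<Rightarrow> real^2 \<Rightarrow> real" where
  "orient a b c = (b$1 - a$1) * (c$2 - a$2) - (b$2 - a$2) * (c$1 - a$1)"

text \<open>Convex position, counterclockwise along the hull, no three collinear:
  every triple in cyclic (increasing index) order is strictly left-turning.\<close>
definition convex_ccw :: "nat \<Rightarrow> (nat \<Rightarrow> real^2) \<Rightarrow> bool" where
  "convex_ccw n p \<longleftrightarrow> inj_on p {..<n} \<and>
     (\<forall>i j k. i < j \<longrightarrow> j < k \<longrightarrow> k < n \<longrightarrow> orient (p i) (p j) (p k) > 0)"

definition no_four_cocircular :: "nat \<Rightarrow> (nat \<Rightarrow> real^2) \<Rightarrow> bool" where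
  "no_four_cocircular n p \<longleftrightarrow>
     (\<forall>i j k l. i < n \<longrightarrow> j < n \<longrightarrow> k < n \<longrightarrow> l < n \<longrightarrow> distinct [i, j, k, l] \<longrightarrow>
        \<not> (\<exists>c r. dist (p i) c = r \<and> dist (p j) c = r \<and> dist (p k) c = r \<and> dist (p l) c = r))"

definition cdist :: "nat \<Rightarrow> nat \<Rightarrow> nat \<Rightarrow> nat" where
  "cdist n i k = (k + n - i) mod n"

definition cyc_closed :: "nat \<Rightarrow> nat \<Rightarrow> nat \<Rightarrow> nat set" where
  "cyc_closed n i j = {k. k < n \<and> cdist n i k \<le> cdist n i j}"

definition cyc_open :: "nat \<Rightarrow> nat \<Rightarrow> nat \<Rightarrow> nat set" where
  "cyc_open n i j = {k. k < n \<and> 0 < cdist n i k \<and> cdist n i k < cdist n i j}"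

definition is_sublist :: "nat \<Rightarrow> nat set \<Rightarrow> bool" where
  "is_sublist n \<alpha> \<longleftrightarrow> (\<exists>i<n. \<exists>j<n. \<alpha> = cyc_closed n i j)"

definition is_partition :: "nat \<Rightarrow> nat set set \<Rightarrow> bool" where
  "is_partition n A \<longleftrightarrow>
     (\<forall>\<alpha>\<in>A. is_sublist n \<alpha> \<and> \<alpha> \<noteq> {}) \<and>
     (\<forall>\<alpha>\<in>A. \<forall>\<beta>\<in>A. \<alpha> \<noteq> \<beta> \<longrightarrow> \<alpha> \<inter> \<beta> = {}) \<and>
     \<Union>A = {..<n}"

definition dominating :: "nat \<Rightarrow> (nat \<Rightarrow> real^2) \<Rightarrow> nat set \<Rightarrow> bool" where
  "dominating n p S \<longleftrightarrow> S \<subseteq> {..<n} \<and>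
     (\<forall>k<n. k \<in> S \<or> (\<exists>s\<in>S. dist (p k) (p s) \<le> 1))"

definition optimal_dominating ::
  "nat \<Rightarrow> (nat \<Rightarrow> real^2) \<Rightarrow> (nat \<Rightarrow> real) \<Rightarrow> nat set \<Rightarrow> bool" where
  "optimal_dominating n p w S \<longleftrightarrow> dominating n p S \<and>
     (\<forall>S'. dominating n p S' \<longrightarrow> sum w S \<le> sum w S')"

definition is_assignment ::
  "nat \<Rightarrow> (nat \<Rightarrow> real^2) \<Rightarrow> nat set \<Rightarrow> nat set set \<Rightarrow> (nat set \<Rightarrow> nat) \<Rightarrow> bool" where
  "is_assignment n p S A \<phi> \<longleftrightarrow>
     (\<forall>\<alpha>\<in>A. \<phi> \<alpha> \<in> S \<and> (\<forall>k\<in>\<alpha>. dist (p k) (p (\<phi> \<alpha>)) \<le> 1))"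

definition center_group :: "nat set set \<Rightarrow> (nat set \<Rightarrow> nat) \<Rightarrow> nat \<Rightarrow> nat set set" where
  "center_group A \<phi> c = {\<alpha>\<in>A. \<phi> \<alpha> = c}"

definition line_separable ::
  "(nat \<Rightarrow> real^2) \<Rightarrow> nat set \<Rightarrow> nat set set \<Rightarrow> (nat set \<Rightarrow> nat) \<Rightarrow> bool" where
  "line_separable p S A \<phi> \<longleftrightarrow>
     (\<forall>c1\<in>S. \<forall>c2\<in>S. c1 \<noteq> c2 \<longrightarrow>
        (\<exists>a b. a \<noteq> 0 \<and> (\<forall>k\<in>\<Union>(center_group A \<phi> c1). a \<bullet> p k \<le> b)
                      \<and> (\<forall>k\<in>\<Union>(center_group A \<phi> c2). a \<bullet> p k > b)))"

text \<open>Portions: for an index k outside the removed sublists F, the first removed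
  sublist met going counterclockwise (next) and clockwise (previous) from k.\<close>
definition next_is :: "nat \<Rightarrow> nat set set \<Rightarrow> nat \<Rightarrow> nat set \<Rightarrow> bool" where
  "next_is n F k X \<longleftrightarrow> X \<in> F \<and> (\<exists>m\<in>X. \<forall>l\<in>\<Union>F. l \<notin> cyc_open n k m)"

definition prev_is :: "nat \<Rightarrow> nat set set \<Rightarrow> nat \<Rightarrow> nat set \<Rightarrow> bool" where
  "prev_is n F k X \<longleftrightarrow> X \<in> F \<and> (\<exists>m\<in>X. \<forall>l\<in>\<Union>F. l \<notin> cyc_open n m k)"

definition portion :: "nat \<Rightarrow> nat set set \<Rightarrow> nat set \<Rightarrow> nat set \<Rightarrow> nat set" where
  "portion n F X Y = {k. k < n \<and> k \<notin> \<Union>F \<and>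
     ((prev_is n F k X \<and> next_is n F k Y) \<or> (prev_is n F k Y \<and> next_is n F k X))}"

end

theory Submission
  imports Defs
begin


definition ori :: "complex \<Rightarrow> complex \<Rightarrow> complex \<Rightarrow> real" where
  "ori x a b = Im (cnj (a - x) * (b - x))"

definition ang :: "complex \<Rightarrow> complex \<Rightarrow> complex \<Rightarrow> real" where
  "ang x a b = Arg2pi ((b - x) / (a - x))"

lemma ori_rot: "ori a b c = ori b c a"
  unfolding ori_def by (simp add: algebra_simps)

lemma ori_ne: "ori x a b > 0 \<Longrightarrow> a \<noteq> x \<and> b \<noteq> x"
  unfolding ori_def by auto

lemma Im_div_ori: "Im ((b - x) / (a - x)) = ori x a b / (cmod (a - x))^2"
  unfolding ori_def by (simp add: Im_divide cmod_power2 algebra_simps)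

lemma ang_pos: assumes "ori x a b > 0" shows "0 < ang x a b" "ang x a b < pi"
proof -
  have "a \<noteq> x" using ori_ne[OF assms] by auto
  then have "Im ((b - x) / (a - x)) > 0" using assms by (simp add: Im_div_ori)
  then show "0 < ang x a b" "ang x a b < pi" unfolding ang_def using Arg2pi_lt_pi by blast+
qed

lemma ang_add:
  assumes "ori x a b > 0" "ori x b c > 0" "ori x a c > 0"
  shows "ang x a c = ang x a b + ang x b c"
proof -
  have ne: "a \<noteq> x" "b \<noteq> x" "c \<noteq> x" using ori_ne assms by auto
  have 1: "ang x a b < pi" "ang x b c < pi" using ang_pos assms by auto
  have z: "(b - x) / (a - x) \<noteq> 0" "(c - x) / (b - x) \<noteq> 0" using ne by auto
  have ne2: "b - x \<noteq> 0" "a - x \<noteq> 0" using ne by auto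
  have prod: "(b - x) / (a - x) * ((c - x) / (b - x)) = (c - x) / (a - x)" using ne2 by (simp add: divide_simps)
  show ?thesis using Arg2pi_add[OF z] 1 unfolding ang_def prod by (auto split: if_splits)
qed

lemma ang_tri:
  assumes "ori a b c > 0"
  shows "ang a b c + ang b c a + ang c a b = pi"
proof -
  have o2: "ori b c a > 0" "ori c a b > 0" using assms ori_rot by metis+
  have ne: "a \<noteq> b" "b \<noteq> c" "c \<noteq> a" using ori_ne assms o2 by auto
  have p: "ang a b c < pi" "ang b c a < pi" "ang c a b < pi" using ang_pos assms o2 by auto
  define z1 where "z1 = (c - a) / (b - a)"
  define z2 where "z2 = (a - b) / (c - b)"
  define z3 where "z3 = (b - c) / (a - c)"
  have nz: "z1 \<noteq> 0" "z2 \<noteq> 0" "z3 \<noteq> 0" "z1 * z2 \<noteq> 0" using ne by (auto simp: z1_def z2_def z3_def)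
  have ne2: "a - b \<noteq> 0" "b - c \<noteq> 0" "c - a \<noteq> 0" using ne by auto
  have prod: "z1 * z2 * z3 = -1" using ne2 unfolding z1_def z2_def z3_def
    by (simp add: divide_simps) (simp add: algebra_simps)
  have a1: "Arg2pi z1 + Arg2pi z2 = Arg2pi (z1 * z2)"
    using Arg2pi_add[OF nz(1,2)] p unfolding ang_def z1_def z2_def by (auto split: if_splits)
  have a2: "Arg2pi (z1 * z2) + Arg2pi z3 = (if Arg2pi (z1*z2) + Arg2pi z3 < 2 * pi then pi else pi + 2*pi)"
  proof -
    have m1: "Arg2pi (-1) = pi" using Arg2pi_of_real[of "-1"] by simp
    show ?thesis using Arg2pi_add[OF nz(4,3)] prod m1 by (auto split: if_splits)
  qed
  have "Arg2pi (z1 * z2) < 2 * pi" using Arg2pi by blast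
  moreover have "Arg2pi z3 < pi" using p unfolding ang_def z3_def by simp
  ultimately have "Arg2pi (z1 * z2) + Arg2pi z3 = pi" using a2 by (auto split: if_splits)
  then show ?thesis using a1 unfolding ang_def z1_def z2_def z3_def by simp
qed

lemma cos_ang:
  assumes "a \<noteq> x" "b \<noteq> x"
  shows "cos (ang x a b) = Re (cnj (a - x) * (b - x)) / (cmod (a - x) * cmod (b - x))"
proof -
  let ?z = "(b - x) / (a - x)"
  have "cmod ?z * cos (Arg2pi ?z) = Re ?z" by (rule cos_Arg2pi)
  moreover have "cmod ?z = cmod (b - x) / cmod (a - x)" by (simp add: norm_divide)
  moreover have "Re ?z = Re (cnj (a - x) * (b - x)) / (cmod (a - x))^2"
    by (simp add: Re_divide cmod_power2 algebra_simps)
  moreover have "cmod (a - x) > 0" "cmod (b - x) > 0" using assms by auto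
  ultimately show ?thesis unfolding ang_def
    by (simp add: field_simps power2_eq_square)
qed

lemma dot_law: "Re (cnj (u - s) * (e - s)) = ((cmod (u - s))^2 + (cmod (e - s))^2 - (cmod (u - e))^2) / 2"
  by (simp only: cmod_power2) (simp add: power2_eq_square algebra_simps)

lemma real_cmp:
  fixes a b c :: real
  assumes "a > 0" "b > 0" "c > 0" "c \<le> a + b"
  shows "(a^2 + c^2 - b^2) / (2*a*c) - (c^2 + b^2 - a^2) / (2*c*b) = (a - b) * ((a + b)^2 - c^2) / (2*a*b*c)"
  using assms by (simp add: field_simps power2_eq_square)

lemma ang_cmp_gen:
  assumes o: "ori s u e > 0"
  shows "cos (ang u e s) - cos (ang s u e) =
     (cmod (u - e) - cmod (e - s)) * ((cmod (u - e) + cmod (e - s))^2 - (cmod (s - u))^2) /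
       (2 * cmod (u - e) * cmod (e - s) * cmod (s - u))"
proof -
  have o2: "ori u e s > 0" using o ori_rot by metis
  have ne: "u \<noteq> s" "e \<noteq> s" "e \<noteq> u" using ori_ne o o2 by auto
  define a where "a = cmod (u - e)"
  define b where "b = cmod (e - s)"
  define c where "c = cmod (s - u)"
  have pos: "a > 0" "b > 0" "c > 0" using ne by (auto simp: a_def b_def c_def)
  have tri: "c \<le> a + b" unfolding a_def b_def c_def
    using norm_triangle_ineq[of "s - e" "e - u"] by (simp add: norm_minus_commute)
  have d1: "Re (cnj (u - s) * (e - s)) = (c^2 + b^2 - a^2) / 2"
    using dot_law[of u s e] by (simp add: a_def b_def c_def norm_minus_commute)
  have d2: "Re (cnj (e - u) * (s - u)) = (a^2 + c^2 - b^2) / 2"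
    using dot_law[of e u s] by (simp add: a_def b_def c_def norm_minus_commute)
  have "cos (ang s u e) = Re (cnj (u - s) * (e - s)) / (cmod (u - s) * cmod (e - s))"
    using cos_ang ne by auto
  also have "\<dots> = (c^2 + b^2 - a^2) / (2*c*b)" unfolding d1
    by (simp add: c_def b_def norm_minus_commute)
  finally have c1: "cos (ang s u e) = (c^2 + b^2 - a^2) / (2*c*b)" .
  have "cos (ang u e s) = Re (cnj (e - u) * (s - u)) / (cmod (e - u) * cmod (s - u))"
    using cos_ang ne by auto
  also have "\<dots> = (a^2 + c^2 - b^2) / (2*a*c)" unfolding d2
    by (simp add: c_def a_def norm_minus_commute)
  finally have c2: "cos (ang u e s) = (a^2 + c^2 - b^2) / (2*a*c)" .
  show ?thesis using real_cmp[OF pos tri] c1 c2 by (simp add: a_def[symmetric] b_def[symmetric] c_def[symmetric])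
qed

lemma ang_cmp_aux:
  assumes o: "ori s u e > 0"
  shows "(cmod (u - e) + cmod (e - s))^2 - (cmod (s - u))^2 \<ge> 0"
    "2 * cmod (u - e) * cmod (e - s) * cmod (s - u) > 0"
proof -
  have o2: "ori u e s > 0" using o ori_rot by metis
  have ne: "u \<noteq> s" "e \<noteq> s" "e \<noteq> u" using ori_ne o o2 by auto
  have tri: "cmod (s - u) \<le> cmod (u - e) + cmod (e - s)"
    using norm_triangle_ineq[of "s - e" "e - u"] by (simp add: norm_minus_commute add.commute)
  have "(cmod (s - u))^2 \<le> (cmod (u - e) + cmod (e - s))^2"
    using tri by (intro power_mono) auto
  then show "(cmod (u - e) + cmod (e - s))^2 - (cmod (s - u))^2 \<ge> 0" by simp
  show "2 * cmod (u - e) * cmod (e - s) * cmod (s - u) > 0" using ne by simp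
qed

lemma ang_cmp1:
  assumes o: "ori s u e > 0" and d: "cmod (u - e) \<ge> cmod (e - s)"
  shows "ang s u e \<ge> ang u e s"
proof -
  have o2: "ori u e s > 0" using o ori_rot by metis
  note A = ang_cmp_aux[OF o]
  have "cos (ang u e s) - cos (ang s u e) \<ge> 0"
    unfolding ang_cmp_gen[OF o] using A d by (intro divide_nonneg_pos mult_nonneg_nonneg) auto
  then have "cos (ang s u e) \<le> cos (ang u e s)" by simp
  then show ?thesis using ang_pos[OF o] ang_pos[OF o2] cos_mono_le_eq by auto
qed

lemma ang_cmp2:
  assumes o: "ori s u e > 0" and d: "cmod (u - e) \<le> cmod (e - s)"
  shows "ang s u e \<le> ang u e s"
proof -
  have o2: "ori u e s > 0" using o ori_rot by metis
  note A = ang_cmp_aux[OF o]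
  have "cos (ang u e s) - cos (ang s u e) \<le> 0"
    unfolding ang_cmp_gen[OF o] using A d by (intro divide_nonpos_pos mult_nonpos_nonneg) auto
  then have "cos (ang u e s) \<le> cos (ang s u e)" by simp
  then show ?thesis using ang_pos[OF o] ang_pos[OF o2] cos_mono_le_eq by auto
qed

lemma gadget_bound:
  assumes o1: "ori s u e > 0" and o2: "ori s w e > 0" and o3: "ori s e A > 0"
    and o4: "ori s A C > 0" and o5: "ori s C D > 0" and o6: "ori s u D > 0"
    and o7: "ori s w D > 0" and o8: "ori s e D > 0" and o9: "ori s A D > 0"
    and o10: "ori e A s > 0" and o11: "ori e s u > 0" and o12: "ori e s w > 0"
    and o13: "ori e A u > 0" and o14: "ori e A w > 0"
    and d1: "cmod (e - s) \<le> 1" and d2: "cmod (u - e) > 1" and d3: "cmod (s - w) > 1"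
  shows "ang s e A + ang s A C + ang s C D + ang e A s < 4*pi/3"
proof -
  have a1: "ang s u D = ang s u e + ang s e D" using ang_add[OF o1 o8 o6] .
  have a2: "ang s w D = ang s w e + ang s e D" using ang_add[OF o2 o8 o7] .
  have a3: "ang s e D = ang s e A + ang s A D" using ang_add[OF o3 o9 o8] .
  have a4: "ang s A D = ang s A C + ang s C D" using ang_add[OF o4 o5 o9] .
  have a5: "ang e A u = ang e A s + ang e s u" using ang_add[OF o10 o11 o13] .
  have a6: "ang e A w = ang e A s + ang e s w" using ang_add[OF o10 o12 o14] .
  have p1: "ang s u D < pi" "ang s w D < pi" "ang e A u < pi" "ang e A w < pi"
    using ang_pos o6 o7 o13 o14 by auto
  have t1: "ang s u e + ang u e s + ang e s u = pi" using ang_tri[OF o1] .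
  have t2: "ang s w e + ang w e s + ang e s w = pi" using ang_tri[OF o2] .
  have c1: "ang s u e \<ge> ang u e s" using ang_cmp1[OF o1] d1 d2 by simp
  have o2': "ori w e s > 0" using o2 ori_rot by metis
  have c2: "ang w e s \<le> ang e s w" using ang_cmp2[OF o2'] d1 d3 by simp
  show ?thesis using a1 a2 a3 a4 a5 a6 p1 t1 t2 c1 c2 by linarith
qed

lemma conv3:
  fixes P :: "'a \<Rightarrow> complex" and r :: "'a \<Rightarrow> nat"
  assumes conv: "\<forall>a\<in>V. \<forall>b\<in>V. \<forall>c\<in>V. r a < r b \<longrightarrow> r b < r c \<longrightarrow> ori (P a) (P b) (P c) > 0"
    and V: "a \<in> V" "b \<in> V" "c \<in> V"
    and o: "(r a < r b \<and> r b < r c) \<or> (r b < r c \<and> r c < r a) \<or> (r c < r a \<and> r a < r b)"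
  shows "ori (P a) (P b) (P c) > 0"
  using o conv V ori_rot by metis

lemma hexagon_contra:
  fixes P :: "'a \<Rightarrow> complex" and r :: "'a \<Rightarrow> nat"
  assumes conv: "\<forall>a\<in>V. \<forall>b\<in>V. \<forall>c\<in>V. r a < r b \<longrightarrow> r b < r c \<longrightarrow> ori (P a) (P b) (P c) > 0"
    and V: "{s1,u1,w1,e1,s2,u2,w2,e2,s3,u3,w3,e3} \<subseteq> V"
    and r1: "r s1 < r u1" "r u1 < r e1" "r s1 < r w1" "r w1 < r e1" "r e1 < r s2"
    and r2: "r s2 < r u2" "r u2 < r e2" "r s2 < r w2" "r w2 < r e2" "r e2 < r s3"
    and r3: "r s3 < r u3" "r u3 < r e3" "r s3 < r w3" "r w3 < r e3"
    and g1: "cmod (P e1 - P s1) \<le> 1" "cmod (P u1 - P e1) > 1" "cmod (P s1 - P w1) > 1"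
    and g2: "cmod (P e2 - P s2) \<le> 1" "cmod (P u2 - P e2) > 1" "cmod (P s2 - P w2) > 1"
    and g3: "cmod (P e3 - P s3) \<le> 1" "cmod (P u3 - P e3) > 1" "cmod (P s3 - P w3) > 1"
  shows False
proof -
  note C = conv3[OF conv]
  have b1: "ang (P s1) (P e1) (P s2) + ang (P s1) (P s2) (P s3) + ang (P s1) (P s3) (P e3) + ang (P e1) (P s2) (P s1) < 4*pi/3"
    apply (rule gadget_bound[of _ "P u1" "P e1" "P w1"])
    using V r1 r2 r3 g1 by (auto intro!: C)
  have b2: "ang (P s2) (P e2) (P s3) + ang (P s2) (P s3) (P s1) + ang (P s2) (P s1) (P e1) + ang (P e2) (P s3) (P s2) < 4*pi/3"
    apply (rule gadget_bound[of _ "P u2" "P e2" "P w2"])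
    using V r1 r2 r3 g2 by (auto intro!: C)
  have b3: "ang (P s3) (P e3) (P s1) + ang (P s3) (P s1) (P s2) + ang (P s3) (P s2) (P e2) + ang (P e3) (P s1) (P s3) < 4*pi/3"
    apply (rule gadget_bound[of _ "P u3" "P e3" "P w3"])
    using V r1 r2 r3 g3 by (auto intro!: C)
  have t1: "ang (P s1) (P e1) (P s2) + ang (P e1) (P s2) (P s1) + ang (P s2) (P s1) (P e1) = pi"
    by (rule ang_tri, rule C) (use V r1 r2 r3 in auto)
  have t2: "ang (P s2) (P e2) (P s3) + ang (P e2) (P s3) (P s2) + ang (P s3) (P s2) (P e2) = pi"
    by (rule ang_tri, rule C) (use V r1 r2 r3 in auto)
  have t3: "ang (P s3) (P e3) (P s1) + ang (P e3) (P s1) (P s3) + ang (P s1) (P s3) (P e3) = pi"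
    by (rule ang_tri, rule C) (use V r1 r2 r3 in auto)
  have tc: "ang (P s1) (P s2) (P s3) + ang (P s2) (P s3) (P s1) + ang (P s3) (P s1) (P s2) = pi"
    by (rule ang_tri, rule C) (use V r1 r2 r3 in auto)
  show False using b1 b2 b3 t1 t2 t3 tc by linarith
qed



lemma cd_eq: "i < n \<Longrightarrow> k < n \<Longrightarrow> cdist n i k = (if i \<le> k then k - i else k + n - i)"
  unfolding cdist_def
  by (auto simp: mod_if le_diff_conv2 less_diff_conv2)

lemma open_iff: "a < n \<Longrightarrow> c < n \<Longrightarrow>
   b \<in> cyc_open n a c \<longleftrightarrow> b < n \<and> (if a \<le> c then a < b \<and> b < c else a < b \<or> b < c)"
  unfolding cyc_open_def by (auto simp: cd_eq split: if_splits)

lemma closed_iff: "a < n \<Longrightarrow> c < n \<Longrightarrow>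
   b \<in> cyc_closed n a c \<longleftrightarrow> b < n \<and> (if a \<le> c then a \<le> b \<and> b \<le> c else a \<le> b \<or> b \<le> c)"
  unfolding cyc_closed_def by (auto simp: cd_eq split: if_splits)

lemma open_lt: "b \<in> cyc_open n a c \<Longrightarrow> b < n" unfolding cyc_open_def by auto
lemma closed_lt: "b \<in> cyc_closed n a c \<Longrightarrow> b < n" unfolding cyc_closed_def by auto

lemma open_sub1: "P < n \<Longrightarrow> N < n \<Longrightarrow> k \<in> cyc_open n P N \<Longrightarrow> cyc_open n P k \<subseteq> cyc_open n P N"
  using open_lt[of k n P N] by (auto simp: open_iff split: if_splits)

lemma open_sub2: "P < n \<Longrightarrow> N < n \<Longrightarrow> k \<in> cyc_open n P N \<Longrightarrow> cyc_open n k N \<subseteq> cyc_open n P N"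
  using open_lt[of k n P N] by (auto simp: open_iff split: if_splits)

lemma gap_unique:
  assumes "P < n" "N < n" "P' < n" "N' < n" "k \<in> cyc_open n P N" "k \<in> cyc_open n P' N'"
    "P \<notin> cyc_open n P' N'" "N \<notin> cyc_open n P' N'" "P' \<notin> cyc_open n P N" "N' \<notin> cyc_open n P N"
  shows "P = P' \<and> N = N'"
  using assms open_lt[of k n P N] by (simp add: open_iff split: if_splits)

lemma sub_in_gap:
  assumes "s < n" "e < n" "P < n" "N < n" "k \<in> cyc_closed n s e" "P \<notin> cyc_closed n s e"
    "N \<notin> cyc_closed n s e" "k \<in> cyc_open n P N"
  shows "cyc_closed n s e \<subseteq> cyc_open n P N"
  using assms open_lt[of k n P N] by (auto simp: open_iff closed_iff split: if_splits)

lemma arc_two: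
  assumes "s < n" "e < n" "P < n" "N < n" "P \<in> cyc_closed n s e" "N \<in> cyc_closed n s e"
    "k \<notin> cyc_closed n s e" "k \<in> cyc_open n P N"
  shows "cyc_open n N P \<subseteq> cyc_closed n s e"
  using assms open_lt[of k n P N] by (auto simp: open_iff closed_iff split: if_splits)

lemma ccw4:
  assumes "a < n" "x < n" "b \<in> cyc_open n a x" "y \<in> cyc_open n x a"
  shows "x \<in> cyc_open n a y" "x \<in> cyc_open n b y" "b \<in> cyc_open n a y"
  using assms open_lt[of b n a x] open_lt[of y n x a] by (auto simp: open_iff split: if_splits)

lemma open_compl:
  assumes "a < n" "b < n" "x < n" "x \<noteq> a" "x \<noteq> b" "a \<noteq> b" "x \<notin> cyc_open n a b"
  shows "x \<in> cyc_open n b a"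
  using assms by (auto simp: open_iff split: if_splits)

lemma closed_pos:
  assumes "s < n" "a < n" "b < n" "x < n" "s \<notin> cyc_closed n a b"
  shows "x \<in> cyc_closed n a b \<longleftrightarrow> cdist n s a \<le> cdist n s x \<and> cdist n s x \<le> cdist n s b"
  using assms by (auto simp: closed_iff cd_eq split: if_splits)

lemma open_pos:
  assumes "s < n" "a < n" "b < n" "x < n" "s \<notin> cyc_closed n a b"
  shows "x \<in> cyc_open n a b \<longleftrightarrow> cdist n s a < cdist n s x \<and> cdist n s x < cdist n s b"
  using assms by (auto simp: closed_iff open_iff cd_eq split: if_splits)

lemma gap_side:
  assumes "a < n" "b < n" "P < n" "N < n" "y \<in> cyc_open n P N" "y \<in> cyc_open n a b"
    "a \<notin> cyc_open n P N" "b \<notin> cyc_open n P N"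
  shows "P \<notin> cyc_open n b a" "N \<notin> cyc_open n b a"
  using assms open_lt[of y n P N] by (auto simp: open_iff split: if_splits)

lemma rank_open:
  assumes "s < n" "a < n" "b < n" "c < n" "cdist n s a < cdist n s b" "cdist n s b < cdist n s c"
  shows "b \<in> cyc_open n a c"
  using assms by (auto simp: open_iff cd_eq split: if_splits)

lemma gap_arc:
  assumes "P < n" "N < n" "c \<in> cyc_open n P N" "t \<in> cyc_open n P N"
  shows "cyc_open n c t \<subseteq> cyc_open n P N \<or> cyc_open n t c \<subseteq> cyc_open n P N"
  using assms open_lt[of c n P N] open_lt[of t n P N] by (auto simp: open_iff split: if_splits)

lemma two_gaps_a:
  assumes "sx < n" "ex < n" "sy < n" "ey < n" "P1 < n" "N1 < n" "P2 < n" "N2 < n" "k1 < n" "k2 < n"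
    "k1 \<in> cyc_open n P1 N1" "k2 \<in> cyc_open n P2 N2" "k2 \<notin> cyc_open n P1 N1"
    "P2 \<notin> cyc_open n P1 N1" "N2 \<notin> cyc_open n P1 N1"
    "P1 \<notin> cyc_open n P2 N2" "N1 \<notin> cyc_open n P2 N2"
    "P1 \<in> cyc_closed n sx ex" "N1 \<in> cyc_closed n sy ey" "P2 \<in> cyc_closed n sx ex" "N2 \<in> cyc_closed n sy ey"
    "N1 \<notin> cyc_closed n sx ex" "N2 \<notin> cyc_closed n sx ex"
    "k1 \<notin> cyc_closed n sx ex" "k2 \<notin> cyc_closed n sx ex"
  shows False
  using assms by (simp add: open_iff closed_iff split: if_splits) linarith?

lemma two_gaps_b:
  assumes "sx < n" "ex < n" "sy < n" "ey < n" "P1 < n" "N1 < n" "P2 < n" "N2 < n" "k1 < n" "k2 < n" "z < n"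
    "k1 \<in> cyc_open n P1 N1" "k2 \<in> cyc_open n P2 N2" "k2 \<notin> cyc_open n P1 N1"
    "P2 \<notin> cyc_open n P1 N1" "N2 \<notin> cyc_open n P1 N1"
    "P1 \<notin> cyc_open n P2 N2" "N1 \<notin> cyc_open n P2 N2"
    "z \<notin> cyc_open n P1 N1" "z \<notin> cyc_open n P2 N2"
    "P1 \<in> cyc_closed n sx ex" "N1 \<in> cyc_closed n sy ey" "P2 \<in> cyc_closed n sy ey" "N2 \<in> cyc_closed n sx ex"
    "k1 \<notin> cyc_closed n sx ex" "k2 \<notin> cyc_closed n sx ex"
    "k1 \<notin> cyc_closed n sy ey" "k2 \<notin> cyc_closed n sy ey"
    "z \<notin> cyc_closed n sx ex" "z \<notin> cyc_closed n sy ey"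
  shows False
  using assms by (simp add: open_iff closed_iff split: if_splits)


lemma open_disj: "a < n \<Longrightarrow> b < n \<Longrightarrow> x \<in> cyc_open n a b \<Longrightarrow> x \<notin> cyc_open n b a"
  using open_lt[of x n a b] by (auto simp: open_iff split: if_splits)

lemma cd_inj: "a < n \<Longrightarrow> x < n \<Longrightarrow> y < n \<Longrightarrow> cdist n a x = cdist n a y \<Longrightarrow> x = y"
  by (auto simp: cd_eq split: if_splits)

lemma gap_from_pos:
  assumes "k < n" "P < n" "N < n" "0 < cdist n k N" "cdist n k N < cdist n k P"
  shows "k \<in> cyc_open n P N"
    "\<And>l. l < n \<Longrightarrow> cdist n k N \<le> cdist n k l \<Longrightarrow> cdist n k l \<le> cdist n k P \<Longrightarrow> l \<notin> cyc_open n P N"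
  using assms by (auto simp: open_iff cd_eq split: if_splits)

lemma arc_in_gap:
  assumes "P < n" "N < n" "s \<in> cyc_open n P N" "e \<in> cyc_open n P N" "P \<in> cyc_open n e s"
  shows "cyc_open n s e \<subseteq> cyc_open n P N"
  using assms open_lt[of s n P N] open_lt[of e n P N] by (auto simp: open_iff split: if_splits)

lemma closed_open: "s < n \<Longrightarrow> e < n \<Longrightarrow> cyc_closed n s e = cyc_open n s e \<union> {s, e}"
  by (auto simp: open_iff closed_iff split: if_splits)

lemma cd_self: "s < n \<Longrightarrow> cdist n s s = 0" by (simp add: cdist_def)

lemma open_ne: "b \<in> cyc_open n a c \<Longrightarrow> b \<noteq> a \<and> a \<noteq> c \<and> b \<noteq> c"
  unfolding cyc_open_def cdist_def by auto



definition cpx :: "real^2 \<Rightarrow> complex" where "cpx v = Complex (v$1) (v$2)"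

lemma orient_rot: "orient a b c = orient b c a"
  unfolding orient_def by (simp add: algebra_simps)

lemma ori_cpx: "ori (cpx a) (cpx b) (cpx c) = orient a b c"
  unfolding ori_def orient_def cpx_def by (simp add: algebra_simps)

lemma dist_cpx: "dist x y = cmod (cpx x - cpx y)"
  unfolding dist_norm norm_vec_def L2_set_def cpx_def cmod_def
  by (simp add: sum_2 power2_eq_square)

lemma conv_open:
  assumes "convex_ccw n p" "a < n" "c < n" "b \<in> cyc_open n a c"
  shows "orient (p a) (p b) (p c) > 0"
proof -
  have b: "b < n" using assms open_lt by blast
  have C: "\<And>x y z. x < y \<Longrightarrow> y < z \<Longrightarrow> z < n \<Longrightarrow> orient (p x) (p y) (p z) > 0"
    using assms(1) unfolding convex_ccw_def by blast
  show ?thesis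
  proof (cases "a \<le> c")
    case True
    then have "a < b" "b < c" using assms b by (auto simp: open_iff)
    then show ?thesis using C assms by blast
  next
    case False
    then have "a < b \<or> b < c" using assms b by (auto simp: open_iff)
    then show ?thesis
    proof
      assume "a < b"
      then have "orient (p c) (p a) (p b) > 0" using C False b by auto
      then show ?thesis using orient_rot by metis
    next
      assume "b < c"
      then have "orient (p b) (p c) (p a) > 0" using C False assms by auto
      then show ?thesis using orient_rot by metis
    qed
  qed
qed

lemma four_point_sep:
  fixes A B X Y v :: "real^2" and \<beta> :: real
  assumes o1: "orient A B X > 0" and o2: "orient A X Y > 0" and o3: "orient B X Y > 0" and o4: "orient A B Y > 0"
    and s1: "v \<bullet> A \<le> \<beta>" "v \<bullet> X \<le> \<beta>" and s2: "v \<bullet> B > \<beta>" "v \<bullet> Y > \<beta>"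
  shows False
proof -
  let ?a = "orient B X Y" and ?b = "orient A X Y" and ?c = "orient A B Y" and ?d = "orient A B X"
  have id: "?a * (v \<bullet> A) + ?c * (v \<bullet> X) = ?b * (v \<bullet> B) + ?d * (v \<bullet> Y)"
    unfolding orient_def inner_vec_def sum_2 by (simp add: algebra_simps)
  have sm: "?a + ?c = ?b + ?d" unfolding orient_def by (simp add: algebra_simps)
  have "?a * (v \<bullet> A) + ?c * (v \<bullet> X) \<le> ?a * \<beta> + ?c * \<beta>"
    using s1 o3 o4 by (intro add_mono mult_left_mono) auto
  moreover have "?b * (v \<bullet> B) + ?d * (v \<bullet> Y) > ?b * \<beta> + ?d * \<beta>"
    using s2 o2 o1 by (intro add_strict_mono mult_strict_left_mono) auto
  moreover have "?a * \<beta> + ?c * \<beta> = ?b * \<beta> + ?d * \<beta>"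
    using sm by (metis distrib_right)
  ultimately show False using id by linarith
qed



definition grp :: "nat set set \<Rightarrow> (nat set \<Rightarrow> nat) \<Rightarrow> nat \<Rightarrow> nat set" where
  "grp A \<phi> c = \<Union>(center_group A \<phi> c)"

definition gad :: "nat \<Rightarrow> (nat \<Rightarrow> real^2) \<Rightarrow> nat \<Rightarrow> nat \<Rightarrow> nat \<Rightarrow> nat \<Rightarrow> bool" where
  "gad n p s u w e \<longleftrightarrow> s < n \<and> e < n \<and> u \<in> cyc_open n s e \<and> w \<in> cyc_open n s e \<and>
     dist (p e) (p s) \<le> 1 \<and> dist (p u) (p e) > 1 \<and> dist (p s) (p w) > 1"

lemma gap_exists:
  assumes fin: "finite U" and Un: "U \<subseteq> {..<n}" and xy: "x \<in> U" "y \<in> U" "x \<noteq> y"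
    and k: "k < n" "k \<notin> U"
  shows "\<exists>P N. P \<in> U \<and> N \<in> U \<and> k \<in> cyc_open n P N \<and> (\<forall>l\<in>U. l \<notin> cyc_open n P N)"
proof -
  let ?f = "cdist n k"
  have ne: "?f ` U \<noteq> {}" using xy by auto
  have fi: "finite (?f ` U)" using fin by auto
  obtain N where N: "N \<in> U" "?f N = Min (?f ` U)" using Min_in[OF fi ne] by auto
  obtain P where P: "P \<in> U" "?f P = Max (?f ` U)" using Max_in[OF fi ne] by auto
  have lo: "\<And>l. l \<in> U \<Longrightarrow> ?f N \<le> ?f l" using N fi by auto
  have hi: "\<And>l. l \<in> U \<Longrightarrow> ?f l \<le> ?f P" using P fi by auto
  have lt: "\<And>l. l \<in> U \<Longrightarrow> l < n" using Un by auto
  have "N \<noteq> k" using N k by auto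
  then have p0: "0 < ?f N" using cd_inj[of k n N k] k lt N cd_self by fastforce
  have p1: "?f N < ?f P"
  proof (rule ccontr)
    assume "\<not> ?f N < ?f P"
    then have "?f x = ?f N" "?f y = ?f N" using lo hi xy by (meson le_antisym not_less order_trans)+
    then have "x = N" "y = N" using cd_inj k lt xy N by metis+
    then show False using xy by simp
  qed
  have "k \<in> cyc_open n P N" using gap_from_pos(1)[OF k(1) lt[OF P(1)] lt[OF N(1)] p0 p1] .
  moreover have "\<forall>l\<in>U. l \<notin> cyc_open n P N"
    using gap_from_pos(2)[OF k(1) lt[OF P(1)] lt[OF N(1)] p0 p1] lo hi lt by blast
  ultimately show ?thesis using P N by blast
qed

lemma portion_of_gap:
  assumes XF: "X \<in> F" and YF: "Y \<in> F" and g: "g \<subseteq> cyc_open n P N" and PN: "P < n" "N < n"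
    and free: "\<forall>l\<in>\<Union>F. l \<notin> cyc_open n P N" and PX: "P \<in> X" and NY: "N \<in> Y"
  shows "g \<subseteq> portion n F X Y" "g \<subseteq> portion n F Y X"
proof -
  have "k \<in> portion n F X Y \<and> k \<in> portion n F Y X" if k: "k \<in> g" for k
  proof -
    have ko: "k \<in> cyc_open n P N" using g k by blast
    have kn: "k < n" using ko open_lt by blast
    have kU: "k \<notin> \<Union>F" using free ko by blast
    have pr: "prev_is n F k X" unfolding prev_is_def
      using XF PX free open_sub1[OF PN ko] by blast
    have nx: "next_is n F k Y" unfolding next_is_def
      using YF NY free open_sub2[OF PN ko] by blast
    show ?thesis unfolding portion_def using kn kU pr nx by blast
  qed
  then show "g \<subseteq> portion n F X Y" "g \<subseteq> portion n F Y X" by auto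
qed

locale L1 =
  fixes n :: nat and p :: "nat \<Rightarrow> real^2" and w :: "nat \<Rightarrow> real"
    and S :: "nat set" and A :: "nat set set" and \<phi> :: "nat set \<Rightarrow> nat"
  assumes conv: "convex_ccw n p"
    and wpos: "\<forall>k<n. w k > 0"
    and opt: "optimal_dominating n p w S"
    and part: "is_partition n A"
    and assign: "is_assignment n p S A \<phi>"
    and sep: "line_separable p S A \<phi>"
    and two: "\<forall>c\<in>S. card (center_group A \<phi> c) \<le> 2 \<and> (\<exists>\<alpha>\<in>center_group A \<phi> c. c \<in> \<alpha>)"
    and second: "\<forall>c\<in>S. \<forall>\<beta>\<in>center_group A \<phi> c. c \<notin> \<beta> \<longrightarrow>
        (\<exists>t\<in>\<beta>. \<exists>q1\<in>S. \<exists>q2\<in>S. q1 \<in> cyc_open n c t \<and> q2 \<in> cyc_open n t c \<and>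
            dist (p t) (p q1) > 1 \<and> dist (p t) (p q2) > 1)"
context L1
begin

lemma A_sub: "\<alpha> \<in> A \<Longrightarrow> \<alpha> \<subseteq> {..<n}"
  using part unfolding is_partition_def by blast

lemma A_ne: "\<alpha> \<in> A \<Longrightarrow> \<alpha> \<noteq> {}"
  using part unfolding is_partition_def by blast

lemma A_sublist: "\<alpha> \<in> A \<Longrightarrow> \<exists>s<n. \<exists>e<n. \<alpha> = cyc_closed n s e"
  using part unfolding is_partition_def is_sublist_def by blast

lemma A_disj: "\<alpha> \<in> A \<Longrightarrow> \<beta> \<in> A \<Longrightarrow> x \<in> \<alpha> \<Longrightarrow> x \<in> \<beta> \<Longrightarrow> \<alpha> = \<beta>"
  using part unfolding is_partition_def by blast

lemma A_cover: "k < n \<Longrightarrow> \<exists>\<alpha>\<in>A. k \<in> \<alpha>"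
  using part unfolding is_partition_def by blast

lemma grp_mem: "k \<in> grp A \<phi> c \<longleftrightarrow> (\<exists>\<alpha>\<in>A. \<phi> \<alpha> = c \<and> k \<in> \<alpha>)"
  unfolding grp_def center_group_def by blast

lemma grp_disj: "k \<in> grp A \<phi> c1 \<Longrightarrow> k \<in> grp A \<phi> c2 \<Longrightarrow> c1 = c2"
  unfolding grp_mem using A_disj by metis

lemma grp_lt: "k \<in> grp A \<phi> c \<Longrightarrow> k < n"
  unfolding grp_mem using A_sub by blast

lemma S_self: "c \<in> S \<Longrightarrow> c \<in> grp A \<phi> c"
  using two unfolding grp_def by blast

lemma S_lt: "c \<in> S \<Longrightarrow> c < n"
  using S_self grp_lt by blast

lemma near: "k \<in> grp A \<phi> c \<Longrightarrow> dist (p k) (p c) \<le> 1"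
  using assign unfolding grp_mem is_assignment_def by blast

lemma nonint:
  assumes c1: "c1 \<in> S" and c2: "c2 \<in> S" and ne: "c1 \<noteq> c2"
    and a: "a \<in> grp A \<phi> c1" and x: "x \<in> grp A \<phi> c1"
    and b: "b \<in> grp A \<phi> c2" and y: "y \<in> grp A \<phi> c2"
    and o1: "b \<in> cyc_open n a x" and o2: "y \<in> cyc_open n x a"
  shows False
proof -
  obtain v \<beta> where s1: "\<forall>k\<in>grp A \<phi> c1. v \<bullet> p k \<le> \<beta>" and s2: "\<forall>k\<in>grp A \<phi> c2. v \<bullet> p k > \<beta>"
    using sep c1 c2 ne unfolding line_separable_def grp_def by blast
  have lt: "a < n" "x < n" "b < n" "y < n" using a x b y grp_lt by auto
  note C = ccw4[OF lt(1,2) o1 o2]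
  have "orient (p a) (p b) (p x) > 0" using conv_open[OF conv lt(1,2) o1] .
  moreover have "orient (p a) (p x) (p y) > 0" using conv_open[OF conv lt(1,4) C(1)] .
  moreover have "orient (p b) (p x) (p y) > 0" using conv_open[OF conv lt(3,4) C(2)] .
  moreover have "orient (p a) (p b) (p y) > 0" using conv_open[OF conv lt(1,4) C(3)] .
  ultimately show False
    using four_point_sep[of "p a" "p b" "p x" "p y" v \<beta>] s1 s2 a x b y by auto
qed

lemma priv:
  assumes q: "q \<in> S"
  shows "\<exists>k\<in>grp A \<phi> q. \<forall>s\<in>S. s \<noteq> q \<longrightarrow> dist (p k) (p s) > 1"
proof (rule ccontr)
  assume "\<not> ?thesis"
  then have H: "\<forall>k\<in>grp A \<phi> q. \<exists>s\<in>S. s \<noteq> q \<and> dist (p k) (p s) \<le> 1" by (auto simp: not_less)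
  have dom: "dominating n p (S - {q})"
    unfolding dominating_def
  proof (intro conjI allI impI)
    show "S - {q} \<subseteq> {..<n}" using S_lt by auto
  next
    fix k assume k: "k < n"
    obtain \<alpha> where \<alpha>: "\<alpha> \<in> A" "k \<in> \<alpha>" using A_cover k by blast
    show "k \<in> S - {q} \<or> (\<exists>s\<in>S - {q}. dist (p k) (p s) \<le> 1)"
    proof (cases "\<phi> \<alpha> = q")
      case True
      then have "k \<in> grp A \<phi> q" using \<alpha> grp_mem by blast
      then show ?thesis using H by blast
    next
      case False
      then show ?thesis using assign \<alpha> unfolding is_assignment_def by blast
    qed
  qed
  have fin: "finite S" using opt unfolding optimal_dominating_def dominating_def
    using finite_subset by blast
  have "sum w S \<le> sum w (S - {q})" using opt dom unfolding optimal_dominating_def by blast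
  also have "\<dots> = sum w S - w q" using fin q by (simp add: sum_diff1)
  finally show False using wpos S_lt q by force
qed

lemma priv_in:
  assumes x: "x \<in> S" and q: "q \<in> S" and qx: "q \<noteq> x"
    and a: "a \<in> grp A \<phi> x" and b: "b \<in> grp A \<phi> x" and o: "q \<in> cyc_open n a b"
  shows "\<exists>v\<in>grp A \<phi> q. v \<in> cyc_open n a b \<and> dist (p v) (p x) > 1"
proof -
  obtain k where k: "k \<in> grp A \<phi> q" "\<forall>s\<in>S. s \<noteq> q \<longrightarrow> dist (p k) (p s) > 1"
    using priv[OF q] by blast
  have d: "dist (p k) (p x) > 1" using k x qx by auto
  have lt: "a < n" "b < n" "k < n" using a b k grp_lt by auto
  have ka: "k \<noteq> a" "k \<noteq> b" using k a b grp_disj qx by blast+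
  have ab: "a \<noteq> b" using open_ne[OF o] by blast
  have "k \<in> cyc_open n a b"
  proof (rule ccontr)
    assume "k \<notin> cyc_open n a b"
    then have "k \<in> cyc_open n b a" using open_compl lt ka ab by blast
    then show False using nonint[OF x q qx[symmetric] a b S_self[OF q] k(1) o] by blast
  qed
  then show ?thesis using k d by blast
qed


lemma center_gadget:
  assumes xS: "x \<in> S" and gx: "center_group A \<phi> x = {a, b}" and ab: "a \<noteq> b"
    and m: "m < n" "m \<notin> grp A \<phi> x"
  shows "\<exists>s u v e. gad n p s u v e \<and> s \<in> grp A \<phi> x \<and> e \<in> grp A \<phi> x \<and> m \<in> cyc_open n e s"
proof -
  obtain \<alpha> where \<alpha>: "\<alpha> \<in> center_group A \<phi> x" "x \<in> \<alpha>" using two xS by blast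
  obtain \<beta> where \<beta>: "\<beta> \<in> center_group A \<phi> x" "\<beta> \<noteq> \<alpha>" using gx ab \<alpha> by blast
  have AA: "\<alpha> \<in> A" "\<beta> \<in> A" using \<alpha> \<beta> unfolding center_group_def by auto
  have xb: "x \<notin> \<beta>" using A_disj[OF AA] \<alpha> \<beta> by blast
  obtain t q1 q2 where t: "t \<in> \<beta>" and q: "q1 \<in> S" "q2 \<in> S" "q1 \<in> cyc_open n x t" "q2 \<in> cyc_open n t x"
      "dist (p t) (p q1) > 1" "dist (p t) (p q2) > 1"
    using second xS \<beta> xb by blast
  have tg: "t \<in> grp A \<phi> x" using t \<beta> unfolding grp_def by blast
  have xg: "x \<in> grp A \<phi> x" using S_self xS .
  have lt: "x < n" "t < n" using xg tg grp_lt by auto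
  have tx: "t \<noteq> x" using t xb by blast
  have mne: "m \<noteq> x" "m \<noteq> t" using m xg tg by auto
  have dtx: "dist (p t) (p x) \<le> 1" using near tg .
  show ?thesis
  proof (cases "m \<in> cyc_open n x t")
    case False
    then have mo: "m \<in> cyc_open n t x" using open_compl lt m mne tx by metis
    have q1x: "q1 \<noteq> x" using open_ne[OF q(3)] by blast
    obtain v where v: "v \<in> cyc_open n x t" "dist (p v) (p x) > 1"
      using priv_in[OF xS q(1) q1x xg tg q(3)] by blast
    have "gad n p x q1 v t" unfolding gad_def using lt q v dtx by (simp add: dist_commute)
    then show ?thesis using xg tg mo by blast
  next
    case True
    have q2x: "q2 \<noteq> x" using open_ne[OF q(4)] by blast
    obtain v where v: "v \<in> cyc_open n t x" "dist (p v) (p x) > 1"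
      using priv_in[OF xS q(2) q2x tg xg q(4)] by blast
    have "gad n p t v q2 x" unfolding gad_def using lt q v dtx by (simp add: dist_commute)
    then show ?thesis using xg tg True by blast
  qed
qed

lemma pure_same:
  assumes xS: "x \<in> S" and cS: "c \<in> S" and xc: "x \<noteq> c"
    and P: "P \<in> grp A \<phi> x" and N: "N \<in> grp A \<phi> x"
    and k: "k \<in> grp A \<phi> c" "k \<in> cyc_open n P N" and k': "k' \<in> grp A \<phi> c"
  shows "k' \<in> cyc_open n P N"
proof (rule ccontr)
  assume nk: "k' \<notin> cyc_open n P N"
  have lt: "P < n" "N < n" "k' < n" using P N k' grp_lt by auto
  have PN: "P \<noteq> N" using open_ne[OF k(2)] by blast
  have ne: "k' \<noteq> P" "k' \<noteq> N" using grp_disj P N k' xc by blast+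
  have "k' \<in> cyc_open n N P" using open_compl lt ne PN nk by metis
  then show False using nonint[OF xS cS xc P N k(1) k' k(2)] by blast
qed


end

locale L2 = L1 +
  fixes i j :: nat and ai bi aj bj :: "nat set"
  assumes iS: "i \<in> S" and jS: "j \<in> S" and ij: "i \<noteq> j"
    and gi: "center_group A \<phi> i = {ai, bi}" "ai \<noteq> bi"
    and gj: "center_group A \<phi> j = {aj, bj}" "aj \<noteq> bj"
context L2
begin

lemma subs: "ai \<in> A" "bi \<in> A" "aj \<in> A" "bj \<in> A"
  "\<phi> ai = i" "\<phi> bi = i" "\<phi> aj = j" "\<phi> bj = j"
proof -
  have "ai \<in> center_group A \<phi> i" "bi \<in> center_group A \<phi> i"
    "aj \<in> center_group A \<phi> j" "bj \<in> center_group A \<phi> j" using gi gj by auto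
  then show "ai \<in> A" "bi \<in> A" "aj \<in> A" "bj \<in> A"
    "\<phi> ai = i" "\<phi> bi = i" "\<phi> aj = j" "\<phi> bj = j" by (auto simp: center_group_def)
qed

lemma grp_i: "grp A \<phi> i = ai \<union> bi" using gi unfolding grp_def by auto
lemma grp_j: "grp A \<phi> j = aj \<union> bj" using gj unfolding grp_def by auto

lemma two_gaps_ctx:
  assumes X: "X \<in> A" and Y: "Y \<in> A" and XY: "X \<noteq> Y" and P1: "P1 \<in> X" and N1: "N1 \<in> Y"
    and P2N2: "(P2 \<in> X \<and> N2 \<in> Y) \<or> (P2 \<in> Y \<and> N2 \<in> X)"
    and k: "k1 \<in> cyc_open n P1 N1" "k2 \<in> cyc_open n P2 N2" "k2 \<notin> cyc_open n P1 N1"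
    and kXY: "k1 \<notin> X \<union> Y" "k2 \<notin> X \<union> Y" "z \<notin> X \<union> Y" and z: "z < n"
    and f1: "P2 \<notin> cyc_open n P1 N1" "N2 \<notin> cyc_open n P1 N1" "z \<notin> cyc_open n P1 N1"
    and f2: "P1 \<notin> cyc_open n P2 N2" "N1 \<notin> cyc_open n P2 N2" "z \<notin> cyc_open n P2 N2"
  shows False
proof -
  obtain sx ex where sx: "sx < n" "ex < n" "X = cyc_closed n sx ex" using A_sublist X by blast
  obtain sy ey where sy: "sy < n" "ey < n" "Y = cyc_closed n sy ey" using A_sublist Y by blast
  have dj: "\<And>u. u \<in> X \<Longrightarrow> u \<notin> Y" using A_disj X Y XY by blast
  have lt: "P1 < n" "N1 < n" "P2 < n" "N2 < n" "k1 < n" "k2 < n"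
    using P1 N1 P2N2 X Y A_sub k open_lt by blast+
  from P2N2 show False
  proof
    assume h: "P2 \<in> X \<and> N2 \<in> Y"
    show False
      apply (rule two_gaps_a[of sx n ex sy ey P1 N1 P2 N2 k1 k2])
      using sx sy lt k f1 f2 P1 N1 h kXY dj by auto
  next
    assume h: "P2 \<in> Y \<and> N2 \<in> X"
    show False
      apply (rule two_gaps_b[of sx n ex sy ey P1 N1 P2 N2 k1 k2 z])
      using sx sy lt k f1 f2 P1 N1 h kXY z by auto
  qed
qed

lemma pure_case:
  assumes xS: "x \<in> S" and cS: "c \<in> S" and xc: "x \<noteq> c" and gx: "center_group A \<phi> x = {a, b}"
    and P: "P \<in> grp A \<phi> x" and N: "N \<in> grp A \<phi> x"
    and free: "\<forall>l\<in>ai \<union> bi \<union> aj \<union> bj. l \<notin> cyc_open n P N"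
    and gxU: "grp A \<phi> x \<subseteq> ai \<union> bi \<union> aj \<union> bj"
    and g1: "g1 \<subseteq> cyc_open n P N" and k1: "k1 \<in> g1"
    and gA: "g1 \<in> A" "g2 \<in> A" "\<phi> g1 = c" "\<phi> g2 = c"
    and g2U: "g2 \<inter> (ai \<union> bi \<union> aj \<union> bj) = {}"
    and z: "z \<in> ai \<union> bi \<union> aj \<union> bj" "z \<notin> grp A \<phi> x"
    and F: "a \<in> F" "b \<in> F" "\<Union>F = ai \<union> bi \<union> aj \<union> bj"
  shows "g1 \<union> g2 \<subseteq> portion n F a b"
proof -
  have lt: "P < n" "N < n" using P N grp_lt by auto
  have k1c: "k1 \<in> grp A \<phi> c" using k1 gA grp_mem by blast
  have k1o: "k1 \<in> cyc_open n P N" using g1 k1 by blast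
  obtain k2 where k2: "k2 \<in> g2" using A_ne gA by blast
  have k2c: "k2 \<in> grp A \<phi> c" using k2 gA grp_mem by blast
  have k2o: "k2 \<in> cyc_open n P N" using pure_same[OF xS cS xc P N k1c k1o k2c] .
  obtain s e where se: "s < n" "e < n" "g2 = cyc_closed n s e" using A_sublist gA by blast
  have PNg2: "P \<notin> g2" "N \<notin> g2" using g2U P N gxU by blast+
  have g2o: "g2 \<subseteq> cyc_open n P N"
    using sub_in_gap[OF se(1,2) lt] se k2 k2o PNg2 by blast
  have gxab: "grp A \<phi> x = a \<union> b" using gx unfolding grp_def by auto
  have abA: "a \<in> A" "b \<in> A" using gx unfolding center_group_def by blast+
  have PN: "P \<noteq> N" using open_ne[OF k1o] by blast
  have zo: "z \<notin> cyc_open n P N" using free z by blast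
  have zn: "z < n" using z gxU subs A_sub by blast
  have zPN: "z \<noteq> P" "z \<noteq> N" using z P N by blast+
  have zNP: "z \<in> cyc_open n N P" using open_compl[OF lt zn zPN PN zo] .
  have k1U: "k1 \<notin> a" "k1 \<notin> b" using free k1o gxU gxab by blast+
  have nota: "\<not> (P \<in> \<alpha> \<and> N \<in> \<alpha>)" if \<alpha>: "\<alpha> \<in> {a, b}" for \<alpha>
  proof
    assume h: "P \<in> \<alpha> \<and> N \<in> \<alpha>"
    obtain sa ea where sa: "sa < n" "ea < n" "\<alpha> = cyc_closed n sa ea" using A_sublist abA \<alpha> by blast
    have "cyc_open n N P \<subseteq> \<alpha>" using arc_two[OF sa(1,2) lt] sa h k1U k1o \<alpha> by blast
    then show False using zNP z gxab \<alpha> by blast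
  qed
  have lab: "(P \<in> a \<and> N \<in> b) \<or> (P \<in> b \<and> N \<in> a)" using nota P N gxab by blast
  have freeF: "\<forall>l\<in>\<Union>F. l \<notin> cyc_open n P N" using free F by simp
  have gg: "g1 \<union> g2 \<subseteq> cyc_open n P N" using g1 g2o by blast
  from lab show ?thesis
  proof
    assume "P \<in> a \<and> N \<in> b"
    then show ?thesis using portion_of_gap(1)[OF F(1,2) gg lt freeF] by blast
  next
    assume "P \<in> b \<and> N \<in> a"
    then show ?thesis using portion_of_gap(2)[OF F(2,1) gg lt freeF] by blast
  qed
qed

end



context L2
begin

lemma gadget_contra:
  assumes cS: "c \<in> S" "c \<noteq> i" "c \<noteq> j" and gc: "center_group A \<phi> c = {g1, g2}" "g1 \<noteq> g2"
    and PN: "P < n" "N < n"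
    and free: "\<forall>l\<in>ai \<union> bi \<union> aj \<union> bj. l \<notin> cyc_open n P N"
    and sub: "grp A \<phi> c \<subseteq> cyc_open n P N"
    and Mi: "Mi \<in> grp A \<phi> i" "Mi \<in> {P, N}" and Mj: "Mj \<in> grp A \<phi> j" "Mj \<in> {P, N}"
  shows False
proof -
  have Pg: "P \<notin> grp A \<phi> c" using sub open_ne by blast
  obtain sc uc wc ec where Gc: "gad n p sc uc wc ec" "sc \<in> grp A \<phi> c" "ec \<in> grp A \<phi> c"
      "P \<in> cyc_open n ec sc"
    using center_gadget[OF cS(1) gc PN(1) Pg] by blast
  have Jn: "Mj < n" "Mj \<notin> grp A \<phi> i" using Mj grp_lt grp_disj ij by blast+
  have In: "Mi < n" "Mi \<notin> grp A \<phi> j" using Mi grp_lt grp_disj ij by blast+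
  obtain si ui wi ei where Gi: "gad n p si ui wi ei" "si \<in> grp A \<phi> i" "ei \<in> grp A \<phi> i"
      "Mj \<in> cyc_open n ei si"
    using center_gadget[OF iS gi Jn] by blast
  obtain sj uj wj ej where Gj: "gad n p sj uj wj ej" "sj \<in> grp A \<phi> j" "ej \<in> grp A \<phi> j"
      "Mi \<in> cyc_open n ej sj"
    using center_gadget[OF jS gj In] by blast
  have gc_: "sc < n" "ec < n" "uc \<in> cyc_open n sc ec" "wc \<in> cyc_open n sc ec"
    "dist (p ec) (p sc) \<le> 1" "dist (p uc) (p ec) > 1" "dist (p sc) (p wc) > 1"
    using Gc(1) unfolding gad_def by auto
  have gi_: "si < n" "ei < n" "ui \<in> cyc_open n si ei" "wi \<in> cyc_open n si ei"
    "dist (p ei) (p si) \<le> 1" "dist (p ui) (p ei) > 1" "dist (p si) (p wi) > 1"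
    using Gi(1) unfolding gad_def by auto
  have gj_: "sj < n" "ej < n" "uj \<in> cyc_open n sj ej" "wj \<in> cyc_open n sj ej"
    "dist (p ej) (p sj) \<le> 1" "dist (p uj) (p ej) > 1" "dist (p sj) (p wj) > 1"
    using Gj(1) unfolding gad_def by auto
  have lt: "uc < n" "wc < n" "ui < n" "wi < n" "uj < n" "wj < n"
    using gc_ gi_ gj_ open_lt by blast+
  have Ui: "grp A \<phi> i \<subseteq> ai \<union> bi \<union> aj \<union> bj" "grp A \<phi> j \<subseteq> ai \<union> bi \<union> aj \<union> bj"
    using grp_i grp_j by auto
  have scG: "sc \<in> cyc_open n P N" "ec \<in> cyc_open n P N" using sub Gc by auto
  have ocG: "cyc_open n sc ec \<subseteq> cyc_open n P N" using arc_in_gap[OF PN scG Gc(4)] .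
  have ccG: "cyc_closed n sc ec \<subseteq> cyc_open n P N" using closed_open[OF gc_(1,2)] ocG scG by auto
  have n1: "y \<notin> cyc_closed n sc ec" if "y \<in> grp A \<phi> i \<union> grp A \<phi> j" for y
    using that ccG free Ui by blast
  have n2i: "y \<notin> cyc_closed n si ei" if y: "y \<in> cyc_open n P N" for y
  proof
    assume yc: "y \<in> cyc_closed n si ei"
    have "y \<noteq> si" "y \<noteq> ei" using y Gi(2,3) free Ui by blast+
    then have yo: "y \<in> cyc_open n si ei" using yc closed_open[OF gi_(1,2)] by auto
    have "si \<notin> cyc_open n P N" "ei \<notin> cyc_open n P N" using Gi(2,3) free Ui by blast+
    then have "P \<notin> cyc_open n ei si" "N \<notin> cyc_open n ei si"
      using gap_side[OF gi_(1,2) PN y yo] by auto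
    then show False using Mj(2) Gi(4) by auto
  qed
  have n2j: "y \<notin> cyc_closed n sj ej" if y: "y \<in> cyc_open n P N" for y
  proof
    assume yc: "y \<in> cyc_closed n sj ej"
    have "y \<noteq> sj" "y \<noteq> ej" using y Gj(2,3) free Ui by blast+
    then have yo: "y \<in> cyc_open n sj ej" using yc closed_open[OF gj_(1,2)] by auto
    have "sj \<notin> cyc_open n P N" "ej \<notin> cyc_open n P N" using Gj(2,3) free Ui by blast+
    then have "P \<notin> cyc_open n ej sj" "N \<notin> cyc_open n ej sj"
      using gap_side[OF gj_(1,2) PN y yo] by auto
    then show False using Mi(2) Gj(4) by auto
  qed
  have n3: "y \<notin> cyc_closed n si ei" if y: "y \<in> grp A \<phi> j" for y
  proof
    assume yc: "y \<in> cyc_closed n si ei"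
    have "y \<noteq> si" "y \<noteq> ei" using y Gi(2,3) grp_disj ij by blast+
    then have yo: "y \<in> cyc_open n si ei" using yc closed_open[OF gi_(1,2)] by auto
    show False using nonint[OF iS jS ij Gi(2,3) y Mj(1) yo Gi(4)] .
  qed
  have n4: "y \<notin> cyc_closed n sj ej" if y: "y \<in> grp A \<phi> i" for y
  proof
    assume yc: "y \<in> cyc_closed n sj ej"
    have "y \<noteq> sj" "y \<noteq> ej" using y Gj(2,3) grp_disj ij by blast+
    then have yo: "y \<in> cyc_open n sj ej" using yc closed_open[OF gj_(1,2)] by auto
    show False using nonint[OF jS iS ij[symmetric] Gj(2,3) y Mi(1) yo Gj(4)] .
  qed
  define r where "r = cdist n sc"
  have scni: "sc \<notin> cyc_closed n si ei" "sc \<notin> cyc_closed n sj ej" using n2i n2j scG by auto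
  have rc: "0 < r uc" "r uc < r ec" "0 < r wc" "r wc < r ec"
    using gc_(3,4) unfolding r_def cyc_open_def by auto
  have rsc: "r sc = 0" using cd_self gc_(1) unfolding r_def by blast
  have rse: "\<not> r si \<le> r ec" "\<not> r sj \<le> r ec"
    using n1[of si] n1[of sj] Gi(2) Gj(2) gi_(1) gj_(1) unfolding r_def cyc_closed_def by auto
  have ri: "r si < r ui" "r ui < r ei" "r si < r wi" "r wi < r ei"
    using open_pos[OF gc_(1) gi_(1,2) _ scni(1)] gi_(3,4) lt unfolding r_def by auto
  have rj: "r sj < r uj" "r uj < r ej" "r sj < r wj" "r wj < r ej"
    using open_pos[OF gc_(1) gj_(1,2) _ scni(2)] gj_(3,4) lt unfolding r_def by auto
  have o1: "\<not> (r si \<le> r sj \<and> r sj \<le> r ei)" "\<not> (r si \<le> r ej \<and> r ej \<le> r ei)"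
    using closed_pos[OF gc_(1) gi_(1,2) _ scni(1)] n3 Gj(2,3) gj_(1,2) unfolding r_def by blast+
  have o2: "\<not> (r sj \<le> r si \<and> r si \<le> r ej)"
    using closed_pos[OF gc_(1) gj_(1,2) _ scni(2)] n4 Gi(2) gi_(1) unfolding r_def by blast
  have ord: "r ei < r sj \<or> r ej < r si" using o1 o2 ri rj by linarith
  have CV: "\<forall>a\<in>{..<n}. \<forall>b\<in>{..<n}. \<forall>c\<in>{..<n}. r a < r b \<longrightarrow> r b < r c \<longrightarrow>
      ori (cpx (p a)) (cpx (p b)) (cpx (p c)) > 0"
  proof (intro ballI impI)
    fix a b c assume abc: "a \<in> {..<n}" "b \<in> {..<n}" "c \<in> {..<n}" "r a < r b" "r b < r c"
    have "b \<in> cyc_open n a c" using rank_open[of sc n a b c] abc gc_(1) unfolding r_def by auto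
    then show "ori (cpx (p a)) (cpx (p b)) (cpx (p c)) > 0"
      using conv_open[OF conv] abc by (simp add: ori_cpx)
  qed
  have D: "cmod (cpx (p ec) - cpx (p sc)) \<le> 1" "cmod (cpx (p uc) - cpx (p ec)) > 1" "cmod (cpx (p sc) - cpx (p wc)) > 1"
    "cmod (cpx (p ei) - cpx (p si)) \<le> 1" "cmod (cpx (p ui) - cpx (p ei)) > 1" "cmod (cpx (p si) - cpx (p wi)) > 1"
    "cmod (cpx (p ej) - cpx (p sj)) \<le> 1" "cmod (cpx (p uj) - cpx (p ej)) > 1" "cmod (cpx (p sj) - cpx (p wj)) > 1"
    using gc_ gi_ gj_ by (simp_all add: dist_cpx)
  have V: "{sc, uc, wc, ec, si, ui, wi, ei, sj, uj, wj, ej} \<subseteq> {..<n}"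
    using gc_ gi_ gj_ lt by auto
  from ord show False
  proof
    assume "r ei < r sj"
    show False
      apply (rule hexagon_contra[of "{..<n}" r "\<lambda>k. cpx (p k)" sc uc wc ec si ui wi ei sj uj wj ej, OF CV])
      using V rsc rc rse ri rj D \<open>r ei < r sj\<close> by (auto simp: insert_commute)
  next
    assume "r ej < r si"
    show False
      apply (rule hexagon_contra[of "{..<n}" r "\<lambda>k. cpx (p k)" sc uc wc ec sj uj wj ej si ui wi ei, OF CV])
      using V rsc rc rse ri rj D \<open>r ej < r si\<close> by (auto simp: insert_commute)
  qed
qed


lemma mixed_labels:
  assumes "M1 \<in> grp A \<phi> i" "M2 \<in> grp A \<phi> j"
  shows "\<exists>X\<in>{ai, bi}. \<exists>Y\<in>{aj, bj}. M1 \<in> X \<and> M2 \<in> Y"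
proof -
  have "M1 \<in> ai \<union> bi" "M2 \<in> aj \<union> bj" using assms grp_i grp_j by auto
  then show ?thesis by auto
qed

lemma main:
  assumes cS: "c \<in> S" "c \<noteq> i" "c \<noteq> j" and gc: "center_group A \<phi> c = {g1, g2}" "g1 \<noteq> g2"
  shows "let F = {ai, bi, aj, bj} in
         g1 \<union> g2 \<subseteq> portion n F ai bi \<or>
         g1 \<union> g2 \<subseteq> portion n F aj bj \<or>
         (\<exists>X\<in>{ai, bi}. \<exists>Y\<in>{aj, bj}. \<exists>X'\<in>{ai, bi}. \<exists>Y'\<in>{aj, bj}.
            (X, Y) \<noteq> (X', Y') \<and> g1 \<subseteq> portion n F X Y \<and> g2 \<subseteq> portion n F X' Y')"
proof -
  define U where "U = ai \<union> bi \<union> aj \<union> bj"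
  define F where "F = {ai, bi, aj, bj}"
  have UF: "\<Union>F = ai \<union> bi \<union> aj \<union> bj" unfolding F_def by auto
  have FF: "ai \<in> F" "bi \<in> F" "aj \<in> F" "bj \<in> F" by (auto simp: F_def)
  have gm: "g1 \<in> center_group A \<phi> c" "g2 \<in> center_group A \<phi> c" using gc(1) by auto
  have gA: "g1 \<in> A" "g2 \<in> A" "\<phi> g1 = c" "\<phi> g2 = c" using gm by (auto simp: center_group_def)
  have grpU: "U = grp A \<phi> i \<union> grp A \<phi> j" using grp_i grp_j U_def by auto
  have gsub: "g1 \<subseteq> grp A \<phi> c" "g2 \<subseteq> grp A \<phi> c" using gm unfolding grp_def by auto
  have grpc: "grp A \<phi> c = g1 \<union> g2" using gc unfolding grp_def by auto
  have cU: "grp A \<phi> c \<inter> U = {}"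
  proof (rule ccontr)
    assume "grp A \<phi> c \<inter> U \<noteq> {}"
    then obtain x where x: "x \<in> grp A \<phi> c" "x \<in> grp A \<phi> i \<or> x \<in> grp A \<phi> j" using grpU by auto
    then show False using grp_disj[of x c i] grp_disj[of x c j] cS by auto
  qed
  have gU: "g1 \<inter> U = {}" "g2 \<inter> U = {}" using cU gsub by auto
  have Usub: "U \<subseteq> {..<n}" unfolding U_def using subs(1-4) A_sub by auto
  have Ufin: "finite U" using Usub finite_subset by auto
  obtain x0 where x0: "x0 \<in> ai" using A_ne[OF subs(1)] by auto
  obtain y0 where y0: "y0 \<in> aj" using A_ne[OF subs(3)] by auto
  have x0g1: "x0 \<in> grp A \<phi> i" using x0 grp_i by auto
  have y0g1: "y0 \<in> grp A \<phi> j" using y0 grp_j by auto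
  have x0g: "x0 \<in> grp A \<phi> i" "x0 \<notin> grp A \<phi> j" using x0g1 grp_disj[OF x0g1, of j] ij by auto
  have y0g: "y0 \<in> grp A \<phi> j" "y0 \<notin> grp A \<phi> i" using y0g1 grp_disj[OF y0g1, of i] ij by auto
  have xy: "x0 \<in> U" "y0 \<in> U" "x0 \<noteq> y0" using x0 y0 x0g y0g U_def by auto
  obtain k1 where k1: "k1 \<in> g1" using A_ne[OF gA(1)] by auto
  obtain k2 where k2: "k2 \<in> g2" using A_ne[OF gA(2)] by auto
  have kk: "k1 < n" "k1 \<notin> U" "k2 < n" "k2 \<notin> U" using k1 k2 gU A_sub[OF gA(1)] A_sub[OF gA(2)] by auto
  obtain P1 N1 where G1: "P1 \<in> U" "N1 \<in> U" "k1 \<in> cyc_open n P1 N1" "\<forall>l\<in>U. l \<notin> cyc_open n P1 N1"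
    using gap_exists[OF Ufin Usub xy kk(1,2)] by blast
  obtain P2 N2 where G2: "P2 \<in> U" "N2 \<in> U" "k2 \<in> cyc_open n P2 N2" "\<forall>l\<in>U. l \<notin> cyc_open n P2 N2"
    using gap_exists[OF Ufin Usub xy kk(3,4)] by blast
  have lt: "P1 < n" "N1 < n" "P2 < n" "N2 < n" using G1 G2 Usub by auto
  have ing: "g \<subseteq> cyc_open n P N"
    if g: "g \<in> A" "g \<inter> U = {}" "k \<in> g" and PN: "P \<in> U" "N \<in> U" "P < n" "N < n" "k \<in> cyc_open n P N"
    for g k P N
  proof -
    obtain s e where se: "s < n" "e < n" "g = cyc_closed n s e" using A_sublist g by blast
    have "P \<notin> g" "N \<notin> g" using g PN by blast+
    then show ?thesis using sub_in_gap[OF se(1,2) PN(3,4)] se g PN by blast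
  qed
  have g1o: "g1 \<subseteq> cyc_open n P1 N1" using ing[OF gA(1) gU(1) k1 G1(1,2) lt(1,2) G1(3)] .
  have g2o: "g2 \<subseteq> cyc_open n P2 N2" using ing[OF gA(2) gU(2) k2 G2(1,2) lt(3,4) G2(3)] .
  have free1: "\<forall>l\<in>ai \<union> bi \<union> aj \<union> bj. l \<notin> cyc_open n P1 N1" using G1 U_def by blast
  have free2: "\<forall>l\<in>ai \<union> bi \<union> aj \<union> bj. l \<notin> cyc_open n P2 N2" using G2 U_def by blast
  have iU: "grp A \<phi> i \<subseteq> ai \<union> bi \<union> aj \<union> bj" "grp A \<phi> j \<subseteq> ai \<union> bi \<union> aj \<union> bj"
    using grpU U_def by auto
  have g1U': "g1 \<inter> (ai \<union> bi \<union> aj \<union> bj) = {}" "g2 \<inter> (ai \<union> bi \<union> aj \<union> bj) = {}" using gU U_def by auto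
  have ic: "i \<noteq> c" "j \<noteq> c" using cS by auto
  have x0U: "x0 \<in> ai \<union> bi \<union> aj \<union> bj" "y0 \<in> ai \<union> bi \<union> aj \<union> bj" using xy U_def by auto
  note PCi1 = pure_case[OF iS cS(1) ic(1) gi(1) _ _ free1 iU(1) g1o k1 gA g1U'(2) x0U(2) y0g(2) FF(1,2) UF]
  note PCj1 = pure_case[OF jS cS(1) ic(2) gj(1) _ _ free1 iU(2) g1o k1 gA g1U'(2) x0U(1) x0g(2) FF(3,4) UF]
  note PCi2 = pure_case[OF iS cS(1) ic(1) gi(1) _ _ free2 iU(1) g2o k2 gA(2,1,4,3) g1U'(1) x0U(2) y0g(2) FF(1,2) UF]
  note PCj2 = pure_case[OF jS cS(1) ic(2) gj(1) _ _ free2 iU(2) g2o k2 gA(2,1,4,3) g1U'(1) x0U(1) x0g(2) FF(3,4) UF]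
  have lab1: "P1 \<in> grp A \<phi> i \<or> P1 \<in> grp A \<phi> j" "N1 \<in> grp A \<phi> i \<or> N1 \<in> grp A \<phi> j"
    "P2 \<in> grp A \<phi> i \<or> P2 \<in> grp A \<phi> j" "N2 \<in> grp A \<phi> i \<or> N2 \<in> grp A \<phi> j"
    using G1 G2 grpU by blast+
  have goal: "g1 \<union> g2 \<subseteq> portion n F ai bi \<or>
         g1 \<union> g2 \<subseteq> portion n F aj bj \<or>
         (\<exists>X\<in>{ai, bi}. \<exists>Y\<in>{aj, bj}. \<exists>X'\<in>{ai, bi}. \<exists>Y'\<in>{aj, bj}.
            (X, Y) \<noteq> (X', Y') \<and> g1 \<subseteq> portion n F X Y \<and> g2 \<subseteq> portion n F X' Y')"
  proof (cases "P1 \<in> grp A \<phi> i \<and> N1 \<in> grp A \<phi> i")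
    case True
    then show ?thesis using PCi1 by blast
  next
    case F1: False
    show ?thesis
    proof (cases "P1 \<in> grp A \<phi> j \<and> N1 \<in> grp A \<phi> j")
      case True
      then show ?thesis using PCj1 by blast
    next
      case F2: False
      obtain Mi Mj where M: "Mi \<in> grp A \<phi> i" "Mj \<in> grp A \<phi> j"
          "(P1 = Mi \<and> N1 = Mj) \<or> (P1 = Mj \<and> N1 = Mi)"
        using F1 F2 lab1(1,2) by blast
      show ?thesis
      proof (cases "k2 \<in> cyc_open n P1 N1")
        case True
        have "g2 \<subseteq> cyc_open n P1 N1" using ing[OF gA(2) gU(2) k2 G1(1,2) lt(1,2) True] .
        then have "grp A \<phi> c \<subseteq> cyc_open n P1 N1" using g1o grpc by blast
        then have False using gadget_contra[OF cS gc lt(1,2) free1 _ M(1) _ M(2)] M(3) by blast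
        then show ?thesis ..
      next
        case k2n: False
        show ?thesis
        proof (cases "P2 \<in> grp A \<phi> i \<and> N2 \<in> grp A \<phi> i")
          case True
          then show ?thesis using PCi2 by (simp add: Un_commute)
        next
          case F3: False
          show ?thesis
          proof (cases "P2 \<in> grp A \<phi> j \<and> N2 \<in> grp A \<phi> j")
            case True
            then show ?thesis using PCj2 by (simp add: Un_commute)
          next
            case F4: False
            obtain Mi2 Mj2 where M2: "Mi2 \<in> grp A \<phi> i" "Mj2 \<in> grp A \<phi> j"
                "(P2 = Mi2 \<and> N2 = Mj2) \<or> (P2 = Mj2 \<and> N2 = Mi2)"
              using F3 F4 lab1(3,4) by blast
            obtain X1 Y1 where XY1: "X1 \<in> {ai, bi}" "Y1 \<in> {aj, bj}" "Mi \<in> X1" "Mj \<in> Y1"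
              using mixed_labels[OF M(1,2)] by blast
            obtain X2 Y2 where XY2: "X2 \<in> {ai, bi}" "Y2 \<in> {aj, bj}" "Mi2 \<in> X2" "Mj2 \<in> Y2"
              using mixed_labels[OF M2(1,2)] by blast
            have XF: "X1 \<in> F" "Y1 \<in> F" "X2 \<in> F" "Y2 \<in> F" using XY1 XY2 FF by auto
            have freeF1: "\<forall>l\<in>\<Union>F. l \<notin> cyc_open n P1 N1" using free1 UF by simp
            have freeF2: "\<forall>l\<in>\<Union>F. l \<notin> cyc_open n P2 N2" using free2 UF by simp
            have p1: "g1 \<subseteq> portion n F X1 Y1"
              using M(3) XY1 portion_of_gap[OF XF(1,2) g1o lt(1,2) freeF1]
                portion_of_gap[OF XF(2,1) g1o lt(1,2) freeF1] by blast
            have p2: "g2 \<subseteq> portion n F X2 Y2"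
              using M2(3) XY2 portion_of_gap[OF XF(3,4) g2o lt(3,4) freeF2]
                portion_of_gap[OF XF(4,3) g2o lt(3,4) freeF2] by blast
            have ne: "(X1, Y1) \<noteq> (X2, Y2)"
            proof
              assume eq: "(X1, Y1) = (X2, Y2)"
              have XA: "X1 \<in> A" "Y1 \<in> A" using XY1 subs by auto
              have Xi: "X1 \<subseteq> grp A \<phi> i" "Y1 \<subseteq> grp A \<phi> j" using XY1 grp_i grp_j by auto
              have XYne: "X1 \<noteq> Y1" using XY1(3) Xi grp_disj ij by blast
              obtain z where z: "z \<in> grp A \<phi> i" "z \<notin> X1"
              proof (cases "X1 = ai")
                case True
                obtain z where "z \<in> bi" using A_ne subs by blast
                moreover have "z \<notin> ai" if "z \<in> bi" for z using that A_disj subs gi(2) by blast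
                ultimately show ?thesis using that True grp_i by blast
              next
                case False
                then have "X1 = bi" using XY1 by auto
                obtain z where "z \<in> ai" using A_ne subs by blast
                moreover have "z \<notin> bi" if "z \<in> ai" for z using that A_disj subs gi(2) by blast
                ultimately show ?thesis using that \<open>X1 = bi\<close> grp_i by blast
              qed
              have zY: "z \<notin> Y1" using z Xi grp_disj ij by blast
              have zU: "z \<in> U" "z < n" using z grpU Usub by auto
              have kXY: "k1 \<notin> X1 \<union> Y1" "k2 \<notin> X1 \<union> Y1" using kk Xi grpU by blast+
              have f1: "P2 \<notin> cyc_open n P1 N1" "N2 \<notin> cyc_open n P1 N1" "z \<notin> cyc_open n P1 N1"
                using G1 G2 zU by blast+
              have f2: "P1 \<notin> cyc_open n P2 N2" "N1 \<notin> cyc_open n P2 N2" "z \<notin> cyc_open n P2 N2"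
                using G1 G2 zU by blast+
              have l2: "(P2 \<in> X1 \<and> N2 \<in> Y1) \<or> (P2 \<in> Y1 \<and> N2 \<in> X1)"
                using M2(3) XY2 eq by auto
              from M(3) show False
              proof
                assume h: "P1 = Mi \<and> N1 = Mj"
                show False
                  apply (rule two_gaps_ctx[OF XA(1,2) XYne _ _ _ G1(3) G2(3) k2n _ _ _ zU(2) f1 f2])
                  using h XY1 l2 kXY z zY by auto
              next
                assume h: "P1 = Mj \<and> N1 = Mi"
                show False
                  apply (rule two_gaps_ctx[OF XA(2,1) XYne[symmetric] _ _ _ G1(3) G2(3) k2n _ _ _ zU(2) f1 f2])
                  using h XY1 l2 kXY z zY by auto
              qed
            qed
            show ?thesis using XY1 XY2 p1 p2 ne by blast
          qed
        qed
      qed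
    qed
  qed
  then show ?thesis unfolding F_def Let_def .
qed

end

theorem lemma3:
  fixes n :: nat and p :: "nat \<Rightarrow> real^2" and w :: "nat \<Rightarrow> real"
    and S :: "nat set" and A :: "nat set set" and \<phi> :: "nat set \<Rightarrow> nat"
    and i j :: nat and ai bi aj bj :: "nat set"
  assumes conv: "convex_ccw n p"
    and cocirc: "no_four_cocircular n p"
    and wpos: "\<forall>k<n. w k > 0"
    and opt: "optimal_dominating n p w S"
    and part: "is_partition n A"
    and assign: "is_assignment n p S A \<phi>"
    and sep: "line_separable p S A \<phi>"
    and two: "\<forall>c\<in>S. card (center_group A \<phi> c) \<le> 2 \<and> (\<exists>\<alpha>\<in>center_group A \<phi> c. c \<in> \<alpha>)"
    and second: "\<forall>c\<in>S. \<forall>\<beta>\<in>center_group A \<phi> c. c \<notin> \<beta> \<longrightarrow>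
        (\<exists>t\<in>\<beta>. \<exists>q1\<in>S. \<exists>q2\<in>S. q1 \<in> cyc_open n c t \<and> q2 \<in> cyc_open n t c \<and>
            dist (p t) (p q1) > 1 \<and> dist (p t) (p q2) > 1)"
    and iS: "i \<in> S" and jS: "j \<in> S" and ij: "i \<noteq> j"
    and gi: "center_group A \<phi> i = {ai, bi}" "ai \<noteq> bi"
    and gj: "center_group A \<phi> j = {aj, bj}" "aj \<noteq> bj"
  shows "\<forall>c\<in>S. c \<noteq> i \<longrightarrow> c \<noteq> j \<longrightarrow> (\<forall>g1 g2. center_group A \<phi> c = {g1, g2} \<longrightarrow> g1 \<noteq> g2 \<longrightarrow>
      (let F = {ai, bi, aj, bj} in
         g1 \<union> g2 \<subseteq> portion n F ai bi \<or>
         g1 \<union> g2 \<subseteq> portion n F aj bj \<or>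
         (\<exists>X\<in>{ai, bi}. \<exists>Y\<in>{aj, bj}. \<exists>X'\<in>{ai, bi}. \<exists>Y'\<in>{aj, bj}.
            (X, Y) \<noteq> (X', Y') \<and> g1 \<subseteq> portion n F X Y \<and> g2 \<subseteq> portion n F X' Y')))"
  proof -
  have L: "L2 n p w S A \<phi> i j ai bi aj bj"
    unfolding L2_def L1_def L2_axioms_def
    using conv wpos opt part assign sep two second iS jS ij gi gj by blast
  show ?thesis using L2.main[OF L] by blast
qed

end
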